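(* Let $l_1\geq l_2\geq 3$ be integers. Let $U_1(l_1,l_2)$ be the graph obtained from the cycle $C_{l_1}$ by attaching a pendent path of length $l_2$ at a vertex $u$ of the cycle, and $U_2(l_1,l_2)$ the graph obtained from the cycle $C_{l_2}$ by attaching a pendent path of length $l_1$ at a vertex $v$ of the cycle. Then $$n(U_1(l_1,l_2))\geq n(U_2(l_1,l_2))\quad\text{and}\quad n(u,U_1(l_1,l_2))\geq n(v,U_2(l_1,l_2)),$$ with equality if and only if $l_1=l_2$.
   Context: A pendent path of length $\ell$ attached at $w$ consists of $\ell$ new vertices $x_1,\dots,x_\ell$ and edges $wx_1,\dots,x_{\ell-1}x_\ell$. A subtree of a graph $G$ is a subgraph that is a tree (distinguished as subgraphs); $n(G)$ is the number of subtrees of $G$, counting also the empty subtree, and $n(x,G)$ is the number of subtrees of $G$ containing the vertex $x$. *)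

theory Defs
  imports Main
begin

type_synonym graph = "nat set \<times> nat set set"

definition is_graph :: "graph \<Rightarrow> bool" where
  "is_graph G \<longleftrightarrow> (\<forall>e\<in>snd G. \<exists>a b. a \<in> fst G \<and> b \<in> fst G \<and> a \<noteq> b \<and> e = {a, b})"

definition connected :: "graph \<Rightarrow> bool" where
  "connected G \<longleftrightarrow> (\<forall>x\<in>fst G. \<forall>y\<in>fst G. (\<lambda>a b. {a, b} \<in> snd G)\<^sup>*\<^sup>* x y)"

definition has_cycle :: "graph \<Rightarrow> bool" where
  "has_cycle G \<longleftrightarrow> (\<exists>xs. length xs \<ge> 3 \<and> distinct xs \<and> set xs \<subseteq> fst G \<and>
      (\<forall>i. Suc i < length xs \<longrightarrow> {xs ! i, xs ! Suc i} \<in> snd G) \<and>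
      {last xs, hd xs} \<in> snd G)"

definition is_tree :: "graph \<Rightarrow> bool" where
  "is_tree T \<longleftrightarrow> is_graph T \<and> fst T \<noteq> {} \<and> finite (fst T) \<and> connected T \<and> \<not> has_cycle T"

definition subtree_of :: "graph \<Rightarrow> graph \<Rightarrow> bool" where
  "subtree_of T G \<longleftrightarrow> fst T \<subseteq> fst G \<and> snd T \<subseteq> snd G \<and> is_tree T"

text \<open>n(G): number of subtrees of G, counting also the empty subtree.\<close>
definition num_subtrees :: "graph \<Rightarrow> nat" where
  "num_subtrees G = card {T. subtree_of T G} + 1"

definition num_subtrees_at :: "nat \<Rightarrow> graph \<Rightarrow> nat" where
  "num_subtrees_at x G = card {T. subtree_of T G \<and> x \<in> fst T}"

text \<open>Cycle C_c on vertices 0..c-1 with a pendent path of length p attached at vertex 0;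
  the path vertices are c, ..., c+p-1, with edges {0,c}, {c,c+1}, ..., {c+p-2,c+p-1}.\<close>
definition cycle_with_path :: "nat \<Rightarrow> nat \<Rightarrow> graph" where
  "cycle_with_path c p =
     ({0..<c+p},
      {{i, (i + 1) mod c} | i. i < c} \<union>
      {{if i = 0 then 0 else c + i - 1, c + i} | i. i < p})"

end

theory Submission
  imports Defs
begin

lemma rt_sym:
  "(\<lambda>a b. {a, b} \<in> E)\<^sup>*\<^sup>* x y \<Longrightarrow> (\<lambda>a b. {a, b} \<in> E)\<^sup>*\<^sup>* y x"
proof (induction rule: rtranclp_induct)
  case base
  then show ?case by simp
next
  case (step y z)
  have "{z, y} \<in> E" using step(2) by (simp add: insert_commute)
  then show ?case using step(3) by (rule converse_rtranclp_into_rtranclp)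
qed

lemma rt_mono:
  "(\<lambda>a b. {a, b} \<in> E)\<^sup>*\<^sup>* x y \<Longrightarrow> E \<subseteq> E' \<Longrightarrow> (\<lambda>a b. {a, b} \<in> E')\<^sup>*\<^sup>* x y"
proof (induction rule: rtranclp_induct)
  case base
  then show ?case by simp
next
  case (step y z)
  then show ?case by (meson rtranclp.rtrancl_into_rtrancl subsetD)
qed

lemma has_cycle_mono:
  "has_cycle (W, F) \<Longrightarrow> W \<subseteq> W' \<Longrightarrow> F \<subseteq> F' \<Longrightarrow> has_cycle (W', F')"
  unfolding has_cycle_def by (auto 0 3)

lemma is_graph_edge:
  "is_graph (W, F) \<Longrightarrow> {a, b} \<in> F \<Longrightarrow> a \<in> W \<and> b \<in> W"
  unfolding is_graph_def by (auto simp: doubleton_eq_iff)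

lemma subtree_mono:
  "subtree_of T G \<Longrightarrow> fst G \<subseteq> fst G' \<Longrightarrow> snd G \<subseteq> snd G' \<Longrightarrow> subtree_of T G'"
  unfolding subtree_of_def by blast

lemma cycle_two_nbrs:
  assumes len: "length xs \<ge> 3" and d: "distinct xs"
    and cons: "\<forall>i. Suc i < length xs \<longrightarrow> {xs ! i, xs ! Suc i} \<in> E"
    and cl: "{last xs, hd xs} \<in> E" and x: "x \<in> set xs"
  shows "\<exists>y z. y \<noteq> z \<and> {x, y} \<in> E \<and> {x, z} \<in> E"
proof -
  obtain k where k: "k < length xs" "x = xs ! k" using x by (metis in_set_conv_nth)
  define n where "n = length xs"
  have ne: "xs \<noteq> []" using len by auto
  have lastn: "last xs = xs ! (n - 1)" using ne n_def by (simp add: last_conv_nth)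
  have hd0: "hd xs = xs ! 0" using ne by (simp add: hd_conv_nth)
  consider "k = 0" | "k = n - 1" | "0 < k \<and> k < n - 1" using k n_def by linarith
  then show ?thesis
  proof cases
    case 1
    have e1: "{x, xs ! 1} \<in> E" using cons len k 1 by (metis One_nat_def Suc_le_lessD le_trans numeral_le_iff one_le_numeral semiring_norm(69) Suc_1 less_Suc_eq_le numeral_3_eq_3 Suc_le_mono)
    have e2: "{x, xs ! (n - 1)} \<in> E" using cl lastn hd0 k 1 by (simp add: insert_commute)
    have "xs ! 1 \<noteq> xs ! (n - 1)" using d len n_def by (simp add: nth_eq_iff_index_eq)
    then show ?thesis using e1 e2 by blast
  next
    case 2
    have e1: "{xs ! (n - 2), x} \<in> E" using cons[rule_format, of "n - 2"] len k 2 n_def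
      by (simp add: Suc_diff_Suc numeral_2_eq_2)
    have e2: "{x, xs ! 0} \<in> E" using cl lastn hd0 k 2 by simp
    have i1: "n - 2 < length xs" "0 < length xs" "n - 2 \<noteq> 0" using len n_def by auto
    have "xs ! (n - 2) \<noteq> xs ! 0" using nth_eq_iff_index_eq[OF d i1(1) i1(2)] i1(3) by blast
    then show ?thesis using e1 e2 by (metis insert_commute)
  next
    case 3
    have e1: "{xs ! (k - 1), x} \<in> E" using cons[rule_format, of "k - 1"] k 3 n_def by simp
    have "Suc k < length xs" using 3 n_def by linarith
    then have e2: "{x, xs ! Suc k} \<in> E" using cons k by simp
    have "xs ! (k - 1) \<noteq> xs ! Suc k" using nth_eq_iff_index_eq[OF d, of "k - 1" "Suc k"] 3 n_def by linarith
    then show ?thesis using e1 e2 by (metis insert_commute)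
  qed
qed

lemma single_tree: "is_tree ({x}, {})"
  unfolding is_tree_def
proof (intro conjI)
  show "is_graph ({x}, {})" by (simp add: is_graph_def)
  show "connected ({x}, {})" by (simp add: connected_def)
  show "\<not> has_cycle ({x}, {})"
  proof
    assume "has_cycle ({x}, {})"
    then obtain xs where "length xs \<ge> 3" "distinct xs" "set xs \<subseteq> {x}"
      unfolding has_cycle_def by auto
    then have "card (set xs) \<ge> 3" "card (set xs) \<le> 1"
      by (auto simp: distinct_card dest: card_mono[rotated])
    then show False by simp
  qed
qed auto

definition addleaf :: "nat \<Rightarrow> nat \<Rightarrow> graph \<Rightarrow> graph" where
  "addleaf u v T = (insert v (fst T), insert {u, v} (snd T))"

lemma leaf_acyclic:
  assumes nc: "\<not> has_cycle (W, F)" and g: "is_graph (W, F)" and v: "v \<notin> W"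
  shows "\<not> has_cycle (insert v W, insert {u, v} F)"
proof
  assume "has_cycle (insert v W, insert {u, v} F)"
  then obtain xs where len: "length xs \<ge> 3" and d: "distinct xs" and sub: "set xs \<subseteq> insert v W"
    and cons: "\<forall>i. Suc i < length xs \<longrightarrow> {xs ! i, xs ! Suc i} \<in> insert {u, v} F"
    and cl: "{last xs, hd xs} \<in> insert {u, v} F"
    unfolding has_cycle_def by auto
  have noF: "{v, y} \<notin> F" for y using is_graph_edge[OF g, of v y] v by auto
  show False
  proof (cases "v \<in> set xs")
    case True
    obtain y z where yz: "y \<noteq> z" "{v, y} \<in> insert {u, v} F" "{v, z} \<in> insert {u, v} F"
      using cycle_two_nbrs[OF len d cons cl True] by blast
    then have "{v, y} = {u, v}" "{v, z} = {u, v}" using noF by auto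
    then have "y = z" by (auto simp: doubleton_eq_iff)
    then show False using yz by simp
  next
    case False
    have ne: "xs \<noteq> []" using len by auto
    have "has_cycle (W, F)"
      unfolding has_cycle_def
    proof (intro exI[of _ xs] conjI allI impI)
      show "length xs \<ge> 3" by fact
      show "distinct xs" by fact
      show "set (xs) \<subseteq> fst (W, F)" using sub False by auto
      fix i assume i: "Suc i < length xs"
      have "xs ! i \<in> set xs" "xs ! Suc i \<in> set xs" using i by auto
      then have "{xs ! i, xs ! Suc i} \<noteq> {u, v}" using False by (metis insertCI insertE singletonD)
      then show "{xs ! i, xs ! Suc i} \<in> snd (W, F)" using cons i by auto
    next
      have "last xs \<in> set xs" "hd xs \<in> set xs" using ne by auto
      then have "{last xs, hd xs} \<noteq> {u, v}" using False by (metis insertCI insertE singletonD)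
      then show "{last xs, hd xs} \<in> snd (W, F)" using cl by auto
    qed
    then show False using nc by simp
  qed
qed

lemma leaf_conn:
  assumes nbr: "\<And>z. {v, z} \<in> F \<Longrightarrow> z = u" and uv: "u \<noteq> v"
  shows "(\<lambda>a b. {a, b} \<in> F)\<^sup>*\<^sup>* x y \<Longrightarrow> x \<noteq> v \<Longrightarrow>
    (if y = v then (\<lambda>a b. {a, b} \<in> F - {{u, v}})\<^sup>*\<^sup>* x u
     else (\<lambda>a b. {a, b} \<in> F - {{u, v}})\<^sup>*\<^sup>* x y)"
proof (induction rule: rtranclp_induct)
  case base
  then show ?case by simp
next
  case (step y z)
  show ?case
  proof (cases "y = v")
    case True
    then have "z = u" using nbr step(2) by simp
    then show ?thesis using step True uv by simp
  next
    case False
    note yv = False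
    show ?thesis
    proof (cases "z = v")
      case True
      then have "{v, y} \<in> F" using step(2) by (simp add: insert_commute)
      then have "y = u" using nbr by simp
      then show ?thesis using step yv True by simp
    next
      case False
      have "{y, z} \<noteq> {u, v}" using False yv by (auto simp: doubleton_eq_iff)
      then have "{y, z} \<in> F - {{u, v}}" using step(2) by simp
      then show ?thesis using step yv False by (simp add: rtranclp.rtrancl_into_rtrancl)
    qed
  qed
qed

lemma leaf_new:
  assumes g: "is_graph (V, E)" and u: "u \<in> V" and v: "v \<notin> V"
  assumes st: "subtree_of T (V, E)" and uT: "u \<in> fst T"
  shows "subtree_of (addleaf u v T) (insert v V, insert {u, v} E)"
proof -
  obtain W F where T: "T = (W, F)" by (cases T)
  have WV: "W \<subseteq> V" and FE: "F \<subseteq> E" and tr: "is_tree (W, F)" using st T by (auto simp: subtree_of_def)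
  have gT: "is_graph (W, F)" and fin: "finite W" and con: "connected (W, F)" and nc: "\<not> has_cycle (W, F)"
    using tr by (auto simp: is_tree_def)
  have uW: "u \<in> W" using uT T by simp
  have vW: "v \<notin> W" using WV v by auto
  have uv: "u \<noteq> v" using u v by auto
  let ?F = "insert {u, v} F"
  have g': "is_graph (insert v W, ?F)"
    unfolding is_graph_def
  proof (intro ballI)
    fix e assume "e \<in> snd (insert v W, ?F)"
    then have "e = {u, v} \<or> e \<in> F" by simp
    then show "\<exists>a b. a \<in> fst (insert v W, ?F) \<and> b \<in> fst (insert v W, ?F) \<and> a \<noteq> b \<and> e = {a, b}"
    proof
      assume "e = {u, v}"
      then show ?thesis using uW uv by (intro exI[of _ u] exI[of _ v]) simp
    next
      assume "e \<in> F"
      then obtain a b where "a \<in> W" "b \<in> W" "a \<noteq> b" "e = {a, b}" using gT unfolding is_graph_def by auto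
      then show ?thesis by (intro exI[of _ a] exI[of _ b]) simp
    qed
  qed
  have reach: "(\<lambda>a b. {a, b} \<in> ?F)\<^sup>*\<^sup>* x u" if "x \<in> insert v W" for x
  proof (cases "x = v")
    case True
    have "{v, u} \<in> ?F" by (simp add: insert_commute)
    then show ?thesis using True by (simp add: r_into_rtranclp)
  next
    case False
    then have "x \<in> W" using that by simp
    then have "(\<lambda>a b. {a, b} \<in> F)\<^sup>*\<^sup>* x u" using con uW by (simp add: connected_def)
    then show ?thesis by (rule rt_mono) auto
  qed
  have con': "connected (insert v W, ?F)"
    unfolding connected_def
  proof (intro ballI)
    fix x y assume "x \<in> fst (insert v W, ?F)" "y \<in> fst (insert v W, ?F)"
    then have xu: "(\<lambda>a b. {a, b} \<in> ?F)\<^sup>*\<^sup>* x u" and yu: "(\<lambda>a b. {a, b} \<in> ?F)\<^sup>*\<^sup>* y u" using reach by auto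
    show "(\<lambda>a b. {a, b} \<in> snd (insert v W, ?F))\<^sup>*\<^sup>* x y"
    proof -
      have "(\<lambda>a b. {a, b} \<in> ?F)\<^sup>*\<^sup>* u y" using yu by (rule rt_sym)
      then have "(\<lambda>a b. {a, b} \<in> ?F)\<^sup>*\<^sup>* x y" using xu by (rule rtranclp_trans[rotated])
      then show ?thesis by simp
    qed
  qed
  have nc': "\<not> has_cycle (insert v W, ?F)" using leaf_acyclic[OF nc gT vW] .
  have "subtree_of (insert v W, ?F) (insert v V, insert {u, v} E)"
    unfolding subtree_of_def is_tree_def using g' con' nc' fin WV FE by auto
  then show ?thesis using T by (simp add: addleaf_def)
qed

lemma leaf_set:
  assumes g: "is_graph (V, E)" and u: "u \<in> V" and v: "v \<notin> V"
  shows "{T. subtree_of T (insert v V, insert {u, v} E)} =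
    {T. subtree_of T (V, E)} \<union> {({v}, {})} \<union> addleaf u v ` {T. subtree_of T (V, E) \<and> u \<in> fst T}"
proof (intro equalityI subsetI)
  fix T assume "T \<in> {T. subtree_of T (insert v V, insert {u, v} E)}"
  then have st: "subtree_of T (insert v V, insert {u, v} E)" by simp
  obtain W F where T: "T = (W, F)" by (cases T)
  have WV: "W \<subseteq> insert v V" and FE: "F \<subseteq> insert {u, v} E" and tr: "is_tree (W, F)"
    using st T by (auto simp: subtree_of_def)
  have gT: "is_graph (W, F)" and fin: "finite W" and con: "connected (W, F)" and nc: "\<not> has_cycle (W, F)"
    and ne: "W \<noteq> {}"
    using tr by (auto simp: is_tree_def)
  have uv: "u \<noteq> v" using u v by auto
  have noE: "{v, z} \<notin> E" for z using is_graph_edge[OF g, of v z] v by auto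
  have nbr: "z = u" if "{v, z} \<in> F" for z
  proof -
    have "{v, z} = {u, v}" using that FE noE by auto
    then show ?thesis using uv by (auto simp: doubleton_eq_iff)
  qed
  show "T \<in> {T. subtree_of T (V, E)} \<union> {({v}, {})} \<union> addleaf u v ` {T. subtree_of T (V, E) \<and> u \<in> fst T}"
  proof (cases "v \<in> W")
    case False
    have "F \<subseteq> E"
    proof
      fix e assume e: "e \<in> F"
      then obtain a b where "e = {a, b}" "a \<in> W" "b \<in> W" using gT unfolding is_graph_def by auto
      then have "e \<noteq> {u, v}" using False by auto
      then show "e \<in> E" using e FE by auto
    qed
    moreover have "W \<subseteq> V" using WV False by auto
    ultimately have "T \<in> {T. subtree_of T (V, E)}" using tr T by (simp add: subtree_of_def)
    then show ?thesis by (rule UnI1[OF UnI1])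
  next
    case True
    note vW = True
    show ?thesis
    proof (cases "\<exists>w\<in>W. w \<noteq> v")
      case False
      then have W1: "W = {v}" using vW by blast
      have "F = {}"
      proof (rule ccontr)
        assume "F \<noteq> {}"
        then obtain e where "e \<in> F" by auto
        then obtain a b where "a \<in> W" "b \<in> W" "a \<noteq> b" using gT unfolding is_graph_def by auto
        then show False using W1 by auto
      qed
      then have "T \<in> {({v}, {})}" using W1 T by simp
      then show ?thesis by (rule UnI1[OF UnI2])
    next
      case True
      then obtain w where w: "w \<in> W" "w \<noteq> v" by auto
      have "(\<lambda>a b. {a, b} \<in> F)\<^sup>*\<^sup>* v w" using con vW w unfolding connected_def by auto
      then obtain z where vz: "{v, z} \<in> F"
        using w(2) by (cases rule: converse_rtranclpE) auto
      then have "z = u" by (rule nbr)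
      then have uvF: "{u, v} \<in> F" using vz by (simp add: insert_commute)
      then have uW: "u \<in> W" using is_graph_edge[OF gT] by blast
      let ?T0 = "(W - {v}, F - {{u, v}})"
      have W0V: "W - {v} \<subseteq> V" using WV by auto
      have F0E: "F - {{u, v}} \<subseteq> E" using FE by auto
      have g0: "is_graph ?T0"
        unfolding is_graph_def
      proof
        fix e assume e: "e \<in> snd ?T0"
        then have "e \<in> E" using F0E by auto
        then obtain a b where ab: "a \<in> V" "b \<in> V" "a \<noteq> b" "e = {a, b}" using g unfolding is_graph_def by auto
        have "a \<in> W" "b \<in> W" using e ab is_graph_edge[OF gT, of a b] by auto
        then show "\<exists>a b. a \<in> fst ?T0 \<and> b \<in> fst ?T0 \<and> a \<noteq> b \<and> e = {a, b}"
          using ab v by auto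
      qed
      have con0: "connected ?T0"
        unfolding connected_def
      proof (intro ballI)
        fix x y assume x: "x \<in> fst ?T0" and y: "y \<in> fst ?T0"
        have "(\<lambda>a b. {a, b} \<in> F)\<^sup>*\<^sup>* x y" using con x y unfolding connected_def by auto
        moreover have "x \<noteq> v" "y \<noteq> v" using x y by auto
        ultimately have "(\<lambda>a b. {a, b} \<in> F - {{u, v}})\<^sup>*\<^sup>* x y"
          using leaf_conn[OF nbr uv, where x=x and y=y] by simp
        then show "(\<lambda>a b. {a, b} \<in> snd ?T0)\<^sup>*\<^sup>* x y" by simp
      qed
      have nc0: "\<not> has_cycle ?T0"
        using nc has_cycle_mono[of "W - {v}" "F - {{u, v}}" W F] by auto
      have ne0: "W - {v} \<noteq> {}" using uW uv by blast
      have fin0: "finite (W - {v})" using fin by blast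
      have "subtree_of ?T0 (V, E)"
        unfolding subtree_of_def is_tree_def
        using W0V F0E g0 con0 nc0 fin0 ne0 by simp
      moreover have "u \<in> fst ?T0" using uW uv by simp
      ultimately have T0in: "?T0 \<in> {T. subtree_of T (V, E) \<and> u \<in> fst T}" by blast
      have "T = addleaf u v ?T0"
        using T vW uvF by (auto simp: addleaf_def)
      then have "T \<in> addleaf u v ` {T. subtree_of T (V, E) \<and> u \<in> fst T}"
        using T0in by (rule image_eqI)
      then show ?thesis by (rule UnI2)
    qed
  qed
next
  fix T assume T: "T \<in> {T. subtree_of T (V, E)} \<union> {({v}, {})} \<union> addleaf u v ` {T. subtree_of T (V, E) \<and> u \<in> fst T}"
  have "subtree_of ({v}, {}) (insert v V, insert {u, v} E)"
    using single_tree by (simp add: subtree_of_def)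
  moreover have "subtree_of T (insert v V, insert {u, v} E)" if "subtree_of T (V, E)"
    using subtree_mono[OF that, of "(insert v V, insert {u, v} E)"] by auto
  moreover have "subtree_of T (insert v V, insert {u, v} E)"
    if "T \<in> addleaf u v ` {T. subtree_of T (V, E) \<and> u \<in> fst T}"
    using that leaf_new[OF g u v] by blast
  ultimately show "T \<in> {T. subtree_of T (insert v V, insert {u, v} E)}"
    using T by blast
qed

lemma finite_subtrees:
  assumes "finite V" "finite E"
  shows "finite {T. subtree_of T (V, E)}"
proof (rule finite_subset)
  show "{T. subtree_of T (V, E)} \<subseteq> Pow V \<times> Pow E" by (auto simp: subtree_of_def)
  show "finite (Pow V \<times> Pow E)" using assms by simp
qed

lemma leaf_card:
  assumes g: "is_graph (V, E)" and u: "u \<in> V" and v: "v \<notin> V" and fV: "finite V" and fE: "finite E"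
  shows "card {T. subtree_of T (insert v V, insert {u, v} E) \<and> Q (fst T)} =
    card {T. subtree_of T (V, E) \<and> Q (fst T)} + (if Q {v} then 1 else 0)
    + card {T. subtree_of T (V, E) \<and> u \<in> fst T \<and> Q (insert v (fst T))}"
proof -
  let ?A = "{T. subtree_of T (V, E) \<and> Q (fst T)}"
  let ?B = "{T. T = ({v}, {} :: nat set set) \<and> Q {v}}"
  let ?C = "{T. subtree_of T (V, E) \<and> u \<in> fst T \<and> Q (insert v (fst T))}"
  let ?X = "{T. subtree_of T (V, E)} \<union> {({v}, {})} \<union> addleaf u v ` {T. subtree_of T (V, E) \<and> u \<in> fst T}"
  have fa: "fst (addleaf u v T) = insert v (fst T)" for T by (simp add: addleaf_def)
  have sa: "snd (addleaf u v T) = insert {u, v} (snd T)" for T by (simp add: addleaf_def)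
  have eq1: "{T. subtree_of T (insert v V, insert {u, v} E) \<and> Q (fst T)} = {T \<in> ?X. Q (fst T)}"
    using leaf_set[OF g u v] by blast
  have eq2: "{T \<in> ?X. Q (fst T)} = ?A \<union> ?B \<union> addleaf u v ` ?C"
  proof (rule set_eqI)
    fix T
    show "T \<in> {T \<in> ?X. Q (fst T)} \<longleftrightarrow> T \<in> ?A \<union> ?B \<union> addleaf u v ` ?C"
    proof
      assume "T \<in> {T \<in> ?X. Q (fst T)}"
      then have TX: "T \<in> ?X" and q: "Q (fst T)" by auto
      from TX consider "subtree_of T (V, E)" | "T = ({v}, {})"
        | S where "subtree_of S (V, E)" "u \<in> fst S" "T = addleaf u v S" by blast
      then show "T \<in> ?A \<union> ?B \<union> addleaf u v ` ?C"
      proof cases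
        case 1 then show ?thesis using q by blast
      next
        case 2 then show ?thesis using q by simp
      next
        case (3 S)
        then have "S \<in> ?C" using q fa by simp
        then show ?thesis using 3 by blast
      qed
    next
      assume "T \<in> ?A \<union> ?B \<union> addleaf u v ` ?C"
      then consider "T \<in> ?A" | "T \<in> ?B" | S where "S \<in> ?C" "T = addleaf u v S" by blast
      then show "T \<in> {T \<in> ?X. Q (fst T)}"
      proof cases
        case 1 then show ?thesis by blast
      next
        case 2 then show ?thesis by simp
      next
        case (3 S)
        then have "Q (fst T)" using fa by simp
        moreover have "T \<in> ?X" using 3 by blast
        ultimately show ?thesis by blast
      qed
    qed
  qed
  have vnot: "v \<notin> fst T" if "subtree_of T (V, E)" for T using that v by (auto simp: subtree_of_def)
  have fin: "finite {T. subtree_of T (V, E)}" using finite_subtrees[OF fV fE] .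
  have fA: "finite ?A" by (rule finite_subset[OF _ fin]) blast
  have fC: "finite ?C" by (rule finite_subset[OF _ fin]) blast
  have fB: "finite ?B" by (rule finite_subset[of _ "{({v}, {})}"]) blast+
  have inj: "inj_on (addleaf u v) ?C"
  proof (rule inj_onI)
    fix S T assume S: "S \<in> ?C" and T: "T \<in> ?C" and e: "addleaf u v S = addleaf u v T"
    have vS: "v \<notin> fst S" "v \<notin> fst T" using S T vnot by auto
    have gS: "is_graph (fst S, snd S)" "is_graph (fst T, snd T)" using S T by (auto simp: subtree_of_def is_tree_def)
    have n1: "{u, v} \<notin> snd S" using vS(1) is_graph_edge[OF gS(1), of u v] by blast
    have n2: "{u, v} \<notin> snd T" using vS(2) is_graph_edge[OF gS(2), of u v] by blast
    have "insert v (fst S) = insert v (fst T)" using e fa by metis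
    then have f: "fst S = fst T" using vS insert_ident by metis
    have "insert {u, v} (snd S) = insert {u, v} (snd T)" using e sa by metis
    then have s: "snd S = snd T" using n1 n2 insert_ident by metis
    show "S = T" using f s by (rule prod_eqI)
  qed
  have d1: "?A \<inter> ?B = {}" using vnot[of "({v}, {})"] by auto
  have d2: "(?A \<union> ?B) \<inter> addleaf u v ` ?C = {}"
  proof -
    have "x \<notin> ?A \<and> x \<notin> ?B" if "x \<in> addleaf u v ` ?C" for x
    proof -
      obtain S where "x = addleaf u v S" using \<open>x \<in> addleaf u v ` ?C\<close> by blast
      then have "v \<in> fst x" "snd x \<noteq> {}" using fa sa by auto
      then show ?thesis using vnot[of x] by auto
    qed
    then show ?thesis by blast
  qed
  have c1: "card (?A \<union> ?B) = card ?A + card ?B" by (rule card_Un_disjoint[OF fA fB d1])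
  have c2: "card (?A \<union> ?B \<union> addleaf u v ` ?C) = card (?A \<union> ?B) + card (addleaf u v ` ?C)"
    using card_Un_disjoint[OF _ _ d2] fA fB fC by simp
  have c3: "card (addleaf u v ` ?C) = card ?C" by (rule card_image[OF inj])
  have c4: "card ?B = (if Q {v} then 1 else 0)" by auto
  show ?thesis using eq1 eq2 c1 c2 c3 c4 by simp
qed

definition path_g :: "(nat \<Rightarrow> nat) \<Rightarrow> nat \<Rightarrow> graph" where
  "path_g f n = (f ` {..<n}, {{f i, f (Suc i)} | i. Suc i < n})"

definition ival :: "(nat \<Rightarrow> nat) \<Rightarrow> nat \<Rightarrow> nat \<Rightarrow> graph" where
  "ival f i j = (f ` {i..j}, {{f t, f (Suc t)} | t. i \<le> t \<and> t < j})"

lemma path_is_graph: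
  assumes inj: "inj_on f {..<n}"
  shows "is_graph (path_g f n)"
  unfolding is_graph_def path_g_def
proof (intro ballI)
  fix e assume "e \<in> snd (f ` {..<n}, {{f i, f (Suc i)} | i. Suc i < n})"
  then obtain i where i: "Suc i < n" "e = {f i, f (Suc i)}" by auto
  have "f i \<noteq> f (Suc i)" using inj i(1) by (auto dest: inj_onD)
  then show "\<exists>a b. a \<in> fst (f ` {..<n}, {{f i, f (Suc i)} | i. Suc i < n}) \<and>
      b \<in> fst (f ` {..<n}, {{f i, f (Suc i)} | i. Suc i < n}) \<and> a \<noteq> b \<and> e = {a, b}"
    using i by (intro exI[of _ "f i"] exI[of _ "f (Suc i)"]) auto
qed

lemma path_step:
  assumes "1 \<le> n"
  shows "path_g f (Suc n) = (insert (f n) (fst (path_g f n)), insert {f (n - 1), f n} (snd (path_g f n)))"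
proof -
  have "f ` {..<Suc n} = insert (f n) (f ` {..<n})" by (simp add: lessThan_Suc)
  moreover have "{{f i, f (Suc i)} | i. Suc i < Suc n} = insert {f (n - 1), f n} {{f i, f (Suc i)} | i. Suc i < n}"
  proof (intro equalityI subsetI)
    fix e assume "e \<in> {{f i, f (Suc i)} | i. Suc i < Suc n}"
    then obtain i where i: "Suc i < Suc n" "e = {f i, f (Suc i)}" by blast
    show "e \<in> insert {f (n - 1), f n} {{f i, f (Suc i)} | i. Suc i < n}"
    proof (cases "Suc i = n")
      case True
      then have "i = n - 1" by simp
      then show ?thesis using i True by simp
    next
      case False
      then have "Suc i < n" using i by simp
      then show ?thesis using i by blast
    qed
  next
    fix e assume "e \<in> insert {f (n - 1), f n} {{f i, f (Suc i)} | i. Suc i < n}"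
    then show "e \<in> {{f i, f (Suc i)} | i. Suc i < Suc n}"
    proof
      assume e: "e = {f (n - 1), f n}"
      have "Suc (n - 1) < Suc n" "Suc (n - 1) = n" using assms by auto
      then show ?thesis using e by (metis (mono_tags, lifting) mem_Collect_eq)
    next
      assume "e \<in> {{f i, f (Suc i)} | i. Suc i < n}"
      then show ?thesis by fastforce
    qed
  qed
  ultimately show ?thesis unfolding path_g_def by simp
qed

lemma ival_single: "ival f n n = ({f n}, {})"
  unfolding ival_def by auto

lemma ival_ext:
  assumes "i \<le> n - 1" "1 \<le> n"
  shows "addleaf (f (n - 1)) (f n) (ival f i (n - 1)) = ival f i n"
proof -
  have a: "insert (f n) (f ` {i..n - 1}) = f ` {i..n}"
  proof -
    have "{i..n} = insert n {i..n - 1}" using assms by auto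
    then show ?thesis by simp
  qed
  have b: "insert {f (n - 1), f n} {{f t, f (Suc t)} | t. i \<le> t \<and> t < n - 1} = {{f t, f (Suc t)} | t. i \<le> t \<and> t < n}"
  proof (intro equalityI subsetI)
    fix e assume "e \<in> insert {f (n - 1), f n} {{f t, f (Suc t)} | t. i \<le> t \<and> t < n - 1}"
    then show "e \<in> {{f t, f (Suc t)} | t. i \<le> t \<and> t < n}"
    proof
      assume e: "e = {f (n - 1), f n}"
      have "i \<le> n - 1" "n - 1 < n" "Suc (n - 1) = n" using assms by auto
      then show ?thesis using e by (metis (mono_tags, lifting) mem_Collect_eq)
    next
      assume "e \<in> {{f t, f (Suc t)} | t. i \<le> t \<and> t < n - 1}"
      then show ?thesis by fastforce
    qed
  next
    fix e assume "e \<in> {{f t, f (Suc t)} | t. i \<le> t \<and> t < n}"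
    then obtain t where t: "i \<le> t" "t < n" "e = {f t, f (Suc t)}" by blast
    show "e \<in> insert {f (n - 1), f n} {{f t, f (Suc t)} | t. i \<le> t \<and> t < n - 1}"
    proof (cases "t = n - 1")
      case True
      then have "Suc t = n" using assms by simp
      then show ?thesis using t True by simp
    next
      case False
      then have "t < n - 1" using t by simp
      then show ?thesis using t by blast
    qed
  qed
  show ?thesis unfolding addleaf_def ival_def using a b by simp
qed

lemma path_char:
  "inj_on f {..<n} \<Longrightarrow> 1 \<le> n \<Longrightarrow> {T. subtree_of T (path_g f n)} = {ival f i j | i j. i \<le> j \<and> j < n}"
proof (induction n)
  case 0
  then show ?case by simp
next
  case (Suc n)
  show ?case
  proof (cases "n = 0")
    case True
    have pg: "path_g f (Suc 0) = ({f 0}, {})" unfolding path_g_def by auto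
    have "{T. subtree_of T (path_g f (Suc 0))} = {({f 0}, {})}"
    proof (intro equalityI subsetI)
      fix T assume "T \<in> {T. subtree_of T (path_g f (Suc 0))}"
      then have "fst T \<subseteq> {f 0}" "snd T \<subseteq> {}" "fst T \<noteq> {}"
        using pg by (auto simp: subtree_of_def is_tree_def)
      then have "fst T = {f 0}" "snd T = {}" by auto
      then show "T \<in> {({f 0}, {})}" by (simp add: prod_eq_iff)
    next
      fix T assume "T \<in> {({f 0}, {} :: nat set set)}"
      then show "T \<in> {T. subtree_of T (path_g f (Suc 0))}"
        using pg single_tree by (simp add: subtree_of_def)
    qed
    moreover have "{ival f i j | i j. i \<le> j \<and> j < Suc 0} = {({f 0}, {})}"
      using ival_single[of f 0] by auto
    ultimately show ?thesis using True by simp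
  next
    case False
    then have n1: "1 \<le> n" by simp
    have inj: "inj_on f {..<Suc n}" using Suc.prems by simp
    have injn: "inj_on f {..<n}" using inj by (rule inj_on_subset) auto
    have IH: "{T. subtree_of T (path_g f n)} = {ival f i j | i j. i \<le> j \<and> j < n}"
      using Suc.IH[OF injn n1] .
    obtain V E where VE: "path_g f n = (V, E)" by (cases "path_g f n")
    have g: "is_graph (V, E)" using path_is_graph[OF injn] VE by simp
    have V: "V = f ` {..<n}" using VE by (simp add: path_g_def)
    have u: "f (n - 1) \<in> V" using V n1 by auto
    have v: "f n \<notin> V"
    proof
      assume "f n \<in> V"
      then obtain k where "k < n" "f n = f k" using V by auto
      then show False using inj by (auto dest: inj_onD)
    qed
    have step: "path_g f (Suc n) = (insert (f n) V, insert {f (n - 1), f n} E)"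
      using path_step[OF n1, of f] VE by simp
    let ?I = "{ival f i j | i j. i \<le> j \<and> j < n}"
    have LS: "{T. subtree_of T (path_g f (Suc n))} =
      ?I \<union> {({f n}, {})} \<union> addleaf (f (n - 1)) (f n) ` {T \<in> ?I. f (n - 1) \<in> fst T}"
    proof -
      have IH': "{T. subtree_of T (V, E)} = ?I" using IH VE by simp
      have C: "{T. subtree_of T (V, E) \<and> f (n - 1) \<in> fst T} = {T \<in> ?I. f (n - 1) \<in> fst T}"
        using IH' by blast
      have "{T. subtree_of T (path_g f (Suc n))} = {T. subtree_of T (V, E)} \<union> {({f n}, {})} \<union>
        addleaf (f (n - 1)) (f n) ` {T. subtree_of T (V, E) \<and> f (n - 1) \<in> fst T}"
        unfolding step by (rule leaf_set[OF g u v])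
      then show ?thesis unfolding IH' C .
    qed
    have A: "{T \<in> ?I. f (n - 1) \<in> fst T} = {ival f i (n - 1) | i. i \<le> n - 1}"
    proof (intro equalityI subsetI)
      fix T assume "T \<in> {T \<in> ?I. f (n - 1) \<in> fst T}"
      then obtain i j where ij: "i \<le> j" "j < n" "T = ival f i j" "f (n - 1) \<in> fst T" by blast
      then obtain t where t: "t \<in> {i..j}" "f (n - 1) = f t" by (auto simp: ival_def)
      have "t = n - 1" using inj t ij n1 by (auto dest: inj_onD)
      then have "j = n - 1" using t ij by auto
      then show "T \<in> {ival f i (n - 1) | i. i \<le> n - 1}" using ij by blast
    next
      fix T assume "T \<in> {ival f i (n - 1) | i. i \<le> n - 1}"
      then obtain i where i: "i \<le> n - 1" "T = ival f i (n - 1)" by blast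
      have "f (n - 1) \<in> fst T" using i by (auto simp: ival_def)
      moreover have "T \<in> ?I" using i n1 by fastforce
      ultimately show "T \<in> {T \<in> ?I. f (n - 1) \<in> fst T}" by blast
    qed
    have B: "addleaf (f (n - 1)) (f n) ` {ival f i (n - 1) | i. i \<le> n - 1} = {ival f i n | i. i \<le> n - 1}"
    proof (intro equalityI subsetI)
      fix T assume "T \<in> addleaf (f (n - 1)) (f n) ` {ival f i (n - 1) | i. i \<le> n - 1}"
      then obtain i where i: "i \<le> n - 1" "T = addleaf (f (n - 1)) (f n) (ival f i (n - 1))" by blast
      then have "T = ival f i n" using ival_ext[OF i(1) n1] by simp
      then show "T \<in> {ival f i n | i. i \<le> n - 1}" using i by blast
    next
      fix T assume "T \<in> {ival f i n | i. i \<le> n - 1}"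
      then obtain i where i: "i \<le> n - 1" "T = ival f i n" by blast
      then have "T = addleaf (f (n - 1)) (f n) (ival f i (n - 1))" using ival_ext[OF i(1) n1] by simp
      then show "T \<in> addleaf (f (n - 1)) (f n) ` {ival f i (n - 1) | i. i \<le> n - 1}"
        using i by blast
    qed
    have "?I \<union> {({f n}, {})} \<union> {ival f i n | i. i \<le> n - 1} = {ival f i j | i j. i \<le> j \<and> j < Suc n}"
    proof (intro equalityI subsetI)
      fix T assume "T \<in> ?I \<union> {({f n}, {})} \<union> {ival f i n | i. i \<le> n - 1}"
      then consider "T \<in> ?I" | "T = ival f n n" | i where "i \<le> n - 1" "T = ival f i n"
        using ival_single[of f n] by (auto simp del: Un_insert_right)
      then show "T \<in> {ival f i j | i j. i \<le> j \<and> j < Suc n}"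
      proof cases
        case 1 then show ?thesis by fastforce
      next
        case 2 then show ?thesis by blast
      next
        case (3 i) then show ?thesis using n1 by fastforce
      qed
    next
      fix T assume "T \<in> {ival f i j | i j. i \<le> j \<and> j < Suc n}"
      then obtain i j where ij: "i \<le> j" "j < Suc n" "T = ival f i j" by blast
      show "T \<in> ?I \<union> {({f n}, {})} \<union> {ival f i n | i. i \<le> n - 1}"
      proof (cases "j < n")
        case True then show ?thesis using ij by blast
      next
        case False
        then have j: "j = n" using ij by simp
        show ?thesis
        proof (cases "i = n")
          case True then show ?thesis using ij j ival_single[of f n] by simp
        next
          case False then have "i \<le> n - 1" using ij j by simp
          then show ?thesis using ij j by blast
        qed
      qed
    qed
    then show ?thesis using LS A B by simp
  qed
qed

definition rot :: "nat \<Rightarrow> nat \<Rightarrow> nat \<Rightarrow> nat" where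
  "rot c m t = (if t < m then c - m + t else t - m)"

definition Wg :: "nat \<Rightarrow> nat \<Rightarrow> nat \<Rightarrow> graph" where
  "Wg c a b = ({0..a} \<union> {b..<c},
     {{x, Suc x} | x. x < a} \<union> {{x, Suc x} | x. b \<le> x \<and> Suc x < c} \<union> {{c - 1, 0}})"

lemma cyc_snd0: "snd (cycle_with_path c 0) = {{i, (i + 1) mod c} | i. i < c}"
  unfolding cycle_with_path_def by simp

lemma cyc_fst: "fst (cycle_with_path c p) = {0..<c + p}"
  unfolding cycle_with_path_def by simp

lemma cyc0:
  assumes "1 \<le> c"
  shows "cycle_with_path c 0 = ({0..<c}, {{i, Suc i} | i. Suc i < c} \<union> {{c - 1, 0}})"
proof -
  have "{{i, (i + 1) mod c} | i. i < c} = {{i, Suc i} | i. Suc i < c} \<union> {{c - 1, 0}}"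
  proof (intro equalityI subsetI)
    fix e assume "e \<in> {{i, (i + 1) mod c} | i. i < c}"
    then obtain i where i: "i < c" "e = {i, (i + 1) mod c}" by blast
    show "e \<in> {{i, Suc i} | i. Suc i < c} \<union> {{c - 1, 0}}"
    proof (cases "Suc i < c")
      case True
      then have "(i + 1) mod c = Suc i" by simp
      then have "e = {i, Suc i}" using i by simp
      then have "e \<in> {{i, Suc i} | i. Suc i < c}" using True by blast
      then show ?thesis by (rule UnI1)
    next
      case False
      then have ic: "Suc i = c" using i by simp
      then have "i = c - 1" "(i + 1) mod c = 0" by auto
      then have "e = {c - 1, 0}" using i by simp
      then show ?thesis by (intro UnI2) simp
    qed
  next
    fix e assume "e \<in> {{i, Suc i} | i. Suc i < c} \<union> {{c - 1, 0}}"
    then consider i where "Suc i < c" "e = {i, Suc i}" | "e = {c - 1, 0}" by blast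
    then show "e \<in> {{i, (i + 1) mod c} | i. i < c}"
    proof cases
      case (1 i)
      then have "(i + 1) mod c = Suc i" "i < c" by auto
      then show ?thesis using 1 by (metis (mono_tags, lifting) mem_Collect_eq)
    next
      case 2
      have "((c - 1) + 1) mod c = 0" "c - 1 < c" using assms by auto
      then show ?thesis using 2 by (metis (mono_tags, lifting) mem_Collect_eq)
    qed
  qed
  then show ?thesis using cyc_snd0[of c] cyc_fst[of c 0] by (metis add_0_right prod.collapse)
qed

lemma path_id: "path_g (\<lambda>t. t) c = ({0..<c}, {{i, Suc i} | i. Suc i < c})"
  unfolding path_g_def by auto

lemma rot_inj: "m < c \<Longrightarrow> inj_on (rot c m) {..<c}"
  unfolding inj_on_def rot_def by auto

lemma rot_img: "m < c \<Longrightarrow> rot c m ` {..<c} = {0..<c}"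
proof (intro equalityI subsetI)
  fix x assume m: "m < c" and "x \<in> rot c m ` {..<c}"
  then show "x \<in> {0..<c}" unfolding rot_def by auto
next
  fix x assume m: "m < c" and x: "x \<in> {0..<c}"
  show "x \<in> rot c m ` {..<c}"
  proof (cases "c - m \<le> x")
    case True
    then have "rot c m (x - (c - m)) = x" "x - (c - m) < c" using m x by (auto simp: rot_def)
    then show ?thesis by (metis image_eqI lessThan_iff)
  next
    case False
    then have "rot c m (x + m) = x" "x + m < c" using m x by (auto simp: rot_def)
    then show ?thesis by (metis image_eqI lessThan_iff)
  qed
qed

lemma path_edge_in: "Suc t < n \<Longrightarrow> {f t, f (Suc t)} \<in> snd (path_g f n)"
  unfolding path_g_def by auto

lemma rot_edges_sub:
  assumes "0 < m" "m < c"
  shows "snd (path_g (rot c m) c) \<subseteq> {{i, Suc i} | i. Suc i < c} \<union> {{c - 1, 0}}"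
proof
  fix e assume "e \<in> snd (path_g (rot c m) c)"
  then obtain t where t: "Suc t < c" "e = {rot c m t, rot c m (Suc t)}" unfolding path_g_def by auto
  consider "Suc t < m" | "Suc t = m" | "m \<le> t" by linarith
  then show "e \<in> {{i, Suc i} | i. Suc i < c} \<union> {{c - 1, 0}}"
  proof cases
    case 1
    then have "rot c m t = c - m + t" "rot c m (Suc t) = Suc (c - m + t)" "Suc (c - m + t) < c"
      using assms by (auto simp: rot_def)
    then show ?thesis using t by auto
  next
    case 2
    then have "rot c m t = c - 1" "rot c m (Suc t) = 0" using assms by (auto simp: rot_def)
    then show ?thesis using t by auto
  next
    case 3
    then have "rot c m t = t - m" "rot c m (Suc t) = Suc (t - m)" "Suc (t - m) < c"
      using assms t by (auto simp: rot_def)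
    then show ?thesis using t by auto
  qed
qed

lemma rot_edges_sup:
  assumes "0 < m" "m < c"
  shows "{{i, Suc i} | i. Suc i < c \<and> i \<noteq> c - m - 1} \<union> {{c - 1, 0}} \<subseteq> snd (path_g (rot c m) c)"
proof
  fix e assume "e \<in> {{i, Suc i} | i. Suc i < c \<and> i \<noteq> c - m - 1} \<union> {{c - 1, 0}}"
  then consider i where "Suc i < c" "i \<noteq> c - m - 1" "e = {i, Suc i}" | "e = {c - 1, 0}" by blast
  then show "e \<in> snd (path_g (rot c m) c)"
  proof cases
    case (1 i)
    show ?thesis
    proof (cases "c - m \<le> i")
      case True
      define t where "t = i - (c - m)"
      have "rot c m t = i" "rot c m (Suc t) = Suc i" "Suc t < c"
        using assms 1 True by (auto simp: rot_def t_def)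
      then show ?thesis using path_edge_in[of t c "rot c m"] 1 by simp
    next
      case False
      define t where "t = i + m"
      have "rot c m t = i" "rot c m (Suc t) = Suc i" "Suc t < c"
        using assms 1 False by (auto simp: rot_def t_def)
      then show ?thesis using path_edge_in[of t c "rot c m"] 1 by simp
    qed
  next
    case 2
    define t where "t = m - 1"
    have "rot c m t = c - 1" "rot c m (Suc t) = 0" "Suc t < c"
      using assms by (auto simp: rot_def t_def)
    then show ?thesis using path_edge_in[of t c "rot c m"] 2 by simp
  qed
qed

lemma W_ival:
  assumes "i < m" "m \<le> j" "j < c"
  shows "ival (rot c m) i j = Wg c (j - m) (c - m + i)"
proof -
  have f: "rot c m ` {i..j} = {0..j - m} \<union> {c - m + i..<c}"
  proof (intro equalityI subsetI)
    fix x assume "x \<in> rot c m ` {i..j}"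
    then obtain t where "t \<in> {i..j}" "x = rot c m t" by blast
    then show "x \<in> {0..j - m} \<union> {c - m + i..<c}" using assms by (auto simp: rot_def)
  next
    fix x assume x: "x \<in> {0..j - m} \<union> {c - m + i..<c}"
    show "x \<in> rot c m ` {i..j}"
    proof (cases "x \<le> j - m")
      case True
      then have "rot c m (x + m) = x" "x + m \<in> {i..j}" using assms by (auto simp: rot_def)
      then show ?thesis by (metis image_eqI)
    next
      case False
      then have "rot c m (x - (c - m)) = x" "x - (c - m) \<in> {i..j}" using assms x by (auto simp: rot_def)
      then show ?thesis by (metis image_eqI)
    qed
  qed
  have s: "{{rot c m t, rot c m (Suc t)} | t. i \<le> t \<and> t < j} =
    {{x, Suc x} | x. x < j - m} \<union> {{x, Suc x} | x. c - m + i \<le> x \<and> Suc x < c} \<union> {{c - 1, 0}}"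
  proof (intro equalityI subsetI)
    fix e assume "e \<in> {{rot c m t, rot c m (Suc t)} | t. i \<le> t \<and> t < j}"
    then obtain t where t: "i \<le> t" "t < j" "e = {rot c m t, rot c m (Suc t)}" by blast
    consider "Suc t < m" | "Suc t = m" | "m \<le> t" by linarith
    then show "e \<in> {{x, Suc x} | x. x < j - m} \<union> {{x, Suc x} | x. c - m + i \<le> x \<and> Suc x < c} \<union> {{c - 1, 0}}"
    proof cases
      case 1
      then have "rot c m t = c - m + t" "rot c m (Suc t) = Suc (c - m + t)" "Suc (c - m + t) < c"
        "c - m + i \<le> c - m + t"
        using assms t by (auto simp: rot_def)
      then have "e \<in> {{x, Suc x} | x. c - m + i \<le> x \<and> Suc x < c}" using t(3) by auto
      then show ?thesis by (rule UnI1[OF UnI2])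
    next
      case 2
      then have "rot c m t = c - 1" "rot c m (Suc t) = 0" using assms by (auto simp: rot_def)
      then have "e = {c - 1, 0}" using t(3) by simp
      then show ?thesis by (intro UnI2) simp
    next
      case 3
      then have "rot c m t = t - m" "rot c m (Suc t) = Suc (t - m)" "t - m < j - m"
        using assms t by (auto simp: rot_def)
      then have "e \<in> {{x, Suc x} | x. x < j - m}" using t(3) by auto
      then show ?thesis by (rule UnI1[OF UnI1])
    qed
  next
    fix e assume "e \<in> {{x, Suc x} | x. x < j - m} \<union> {{x, Suc x} | x. c - m + i \<le> x \<and> Suc x < c} \<union> {{c - 1, 0}}"
    then consider x where "x < j - m" "e = {x, Suc x}" | x where "c - m + i \<le> x" "Suc x < c" "e = {x, Suc x}"
      | "e = {c - 1, 0}" by blast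
    then show "e \<in> {{rot c m t, rot c m (Suc t)} | t. i \<le> t \<and> t < j}"
    proof cases
      case (1 x)
      define t where "t = x + m"
      have "rot c m t = x" "rot c m (Suc t) = Suc x" "i \<le> t" "t < j"
        using assms 1 by (auto simp: rot_def t_def)
      then show ?thesis using 1 by (metis (mono_tags, lifting) mem_Collect_eq)
    next
      case (2 x)
      define t where "t = x - (c - m)"
      have "rot c m t = x" "rot c m (Suc t) = Suc x" "i \<le> t" "t < j"
        using assms 2 by (auto simp: rot_def t_def)
      then show ?thesis using 2 by (metis (mono_tags, lifting) mem_Collect_eq)
    next
      case 3
      define t where "t = m - 1"
      have "rot c m t = c - 1" "rot c m (Suc t) = 0" "i \<le> t" "t < j"
        using assms by (auto simp: rot_def t_def)
      then show ?thesis using 3 by (metis (mono_tags, lifting) mem_Collect_eq)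
    qed
  qed
  show ?thesis unfolding ival_def Wg_def using f s by (simp add: Un_commute)
qed

lemma ival_wrap:
  assumes c: "3 \<le> c" and m: "0 < m" "m < c" and e: "{c - 1, 0} \<in> snd (ival (rot c m) i j)"
  shows "i < m \<and> m \<le> j"
proof -
  obtain t where t: "i \<le> t" "t < j" "{c - 1, 0} = {rot c m t, rot c m (Suc t)}"
    using e unfolding ival_def by auto
  consider "Suc t < m" | "Suc t = m" | "m \<le> t" by linarith
  then show ?thesis
  proof cases
    case 1
    then have "rot c m t \<noteq> 0" "rot c m (Suc t) \<noteq> 0" using m by (auto simp: rot_def)
    then show ?thesis using t(3) by (metis insertI1 insertE insert_commute singletonD)
  next
    case 2
    then show ?thesis using t by simp
  next
    case 3
    then have r: "rot c m t = t - m" "rot c m (Suc t) = Suc (t - m)" by (auto simp: rot_def)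
    have "0 \<in> {rot c m t, rot c m (Suc t)}" using t(3) by (metis insertI1 insert_commute)
    then have "t - m = 0" using r by auto
    then have "{c - 1, 0} = {0, 1}" using t(3) r by simp
    then have "c - 1 = 1" by (auto simp: doubleton_eq_iff)
    then show ?thesis using c by simp
  qed
qed

lemma all_edges_cycle:
  assumes c: "3 \<le> c" and g: "is_graph (W, F)"
    and all: "\<forall>k. Suc k < c \<longrightarrow> {k, Suc k} \<in> F" and cl: "{c - 1, 0} \<in> F"
  shows "has_cycle (W, F)"
  unfolding has_cycle_def
proof (intro exI[of _ "[0..<c]"] conjI allI impI)
  show "3 \<le> length [0..<c]" using c by simp
  show "distinct [0..<c]" by simp
  show "set [0..<c] \<subseteq> fst (W, F)"
  proof
    fix x assume "x \<in> set [0..<c]"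
    then have x: "x < c" by simp
    show "x \<in> fst (W, F)"
    proof (cases "Suc x < c")
      case True
      then show ?thesis using all is_graph_edge[OF g, of x "Suc x"] by simp
    next
      case False
      then have "x = c - 1" using x by simp
      then show ?thesis using cl is_graph_edge[OF g, of "c - 1" 0] by simp
    qed
  qed
  fix i assume "Suc i < length [0..<c]"
  then show "{[0..<c] ! i, [0..<c] ! Suc i} \<in> snd (W, F)" using all by simp
next
  have "last [0..<c] = c - 1" "hd [0..<c] = 0" using c by (auto simp: last_upt hd_upt)
  then show "{last [0..<c], hd [0..<c]} \<in> snd (W, F)" using cl by simp
qed

lemma arithZ:
  fixes l1 l2 :: nat
  assumes "l2 \<le> l1"
  shows "(l2 + 1) * (l1 * (l1 + 1)) = (l1 + 1) * (l2 * (l2 + 1)) + (l2 + 1) * (l1 + 1) * (l1 - l2)"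
proof -
  obtain d where d: "l1 = l2 + d" using assms le_Suc_ex by blast
  show ?thesis unfolding d by (simp add: algebra_simps)
qed
lemma arithS:
  fixes l1 l2 :: nat
  assumes "l2 \<le> l1"
  shows "(2 * l1 * l1 + l2 * (l2 + 1) + l2 * (l1 * (l1 + 1))) + 2 * (l1 - l2) =
         (2 * l2 * l2 + l1 * (l1 + 1) + l1 * (l2 * (l2 + 1))) + (l1 - l2) * (l1 + 1) * (l2 + 1)"
proof -
  obtain d where d: "l1 = l2 + d" using assms le_Suc_ex by blast
  show ?thesis unfolding d by (simp add: algebra_simps)
qed

lemma cyc_char:
  assumes c: "3 \<le> c"
  shows "{T. subtree_of T (cycle_with_path c 0)} =
    {ival (\<lambda>t. t) i j | i j. i \<le> j \<and> j < c} \<union> {Wg c a b | a b. a < b \<and> b < c}"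
proof -
  let ?PE = "{{i, Suc i} | i. Suc i < c}"
  have C: "cycle_with_path c 0 = ({0..<c}, ?PE \<union> {{c - 1, 0}})" using cyc0 c by simp
  have injid: "inj_on (\<lambda>t. t) {..<c}" by simp
  have PI: "{T. subtree_of T (path_g (\<lambda>t. t) c)} = {ival (\<lambda>t. t) i j | i j. i \<le> j \<and> j < c}"
    using path_char[OF injid] c by simp
  have PR: "{T. subtree_of T (path_g (rot c m) c)} = {ival (rot c m) i j | i j. i \<le> j \<and> j < c}"
    if "m < c" for m
    using path_char[OF rot_inj[OF that]] c by simp
  show ?thesis
  proof (intro equalityI subsetI)
    fix T assume "T \<in> {T. subtree_of T (cycle_with_path c 0)}"
    then have st: "subtree_of T ({0..<c}, ?PE \<union> {{c - 1, 0}})" using C by simp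
    obtain W F where T: "T = (W, F)" by (cases T)
    have WV: "W \<subseteq> {0..<c}" and FE: "F \<subseteq> ?PE \<union> {{c - 1, 0}}" and tr: "is_tree (W, F)"
      using st T by (auto simp: subtree_of_def)
    have g: "is_graph (W, F)" and nc: "\<not> has_cycle (W, F)" using tr by (auto simp: is_tree_def)
    show "T \<in> {ival (\<lambda>t. t) i j | i j. i \<le> j \<and> j < c} \<union> {Wg c a b | a b. a < b \<and> b < c}"
    proof (cases "{c - 1, 0} \<in> F")
      case False
      have "F \<subseteq> ?PE" using FE False by blast
      then have "subtree_of T (path_g (\<lambda>t. t) c)"
        using WV tr T by (simp add: subtree_of_def path_id)
      then have "T \<in> {ival (\<lambda>t. t) i j | i j. i \<le> j \<and> j < c}" using PI by blast
      then show ?thesis by (rule UnI1)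
    next
      case True
      obtain k where k: "Suc k < c" "{k, Suc k} \<notin> F"
      proof (rule ccontr)
        assume "\<not> thesis"
        then have "\<forall>k. Suc k < c \<longrightarrow> {k, Suc k} \<in> F" using that by blast
        then have "has_cycle (W, F)" using all_edges_cycle[OF c g _ True] by blast
        then show False using nc by simp
      qed
      define m where "m = c - 1 - k"
      have m: "0 < m" "m < c" "c - m - 1 = k" using k m_def by auto
      have Fs: "F \<subseteq> snd (path_g (rot c m) c)"
      proof
        fix e assume e: "e \<in> F"
        then have "e \<in> ?PE \<union> {{c - 1, 0}}" using FE by blast
        then have "e \<in> {{i, Suc i} | i. Suc i < c \<and> i \<noteq> c - m - 1} \<union> {{c - 1, 0}}"
          using e k m(3) by blast
        then show "e \<in> snd (path_g (rot c m) c)" using rot_edges_sup[OF m(1) m(2)] by blast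
      qed
      have Ws: "W \<subseteq> fst (path_g (rot c m) c)" using WV rot_img[OF m(2)] by (simp add: path_g_def)
      have "subtree_of T (path_g (rot c m) c)" using Fs Ws tr T by (simp add: subtree_of_def)
      then have "T \<in> {ival (rot c m) i j | i j. i \<le> j \<and> j < c}" using PR[OF m(2)] by blast
      then obtain i j where ij: "i \<le> j" "j < c" "T = ival (rot c m) i j" by blast
      have "{c - 1, 0} \<in> snd (ival (rot c m) i j)" using True T ij by simp
      then have im: "i < m" "m \<le> j" using ival_wrap[OF c m(1) m(2)] by auto
      have "T = Wg c (j - m) (c - m + i)" using W_ival[OF im ij(2)] ij by simp
      moreover have "j - m < c - m + i" "c - m + i < c" using im ij m by auto
      ultimately have "T \<in> {Wg c a b | a b. a < b \<and> b < c}" by blast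
      then show ?thesis by (rule UnI2)
    qed
  next
    fix T assume "T \<in> {ival (\<lambda>t. t) i j | i j. i \<le> j \<and> j < c} \<union> {Wg c a b | a b. a < b \<and> b < c}"
    then consider "T \<in> {ival (\<lambda>t. t) i j | i j. i \<le> j \<and> j < c}" | a b where "a < b" "b < c" "T = Wg c a b"
      by blast
    then show "T \<in> {T. subtree_of T (cycle_with_path c 0)}"
    proof cases
      case 1
      then have "subtree_of T (path_g (\<lambda>t. t) c)" using PI by blast
      then have "subtree_of T (cycle_with_path c 0)"
        by (rule subtree_mono) (auto simp: C path_id)
      then show ?thesis by simp
    next
      case (2 a b)
      define m where "m = c - b"
      have m: "0 < m" "m < c" "m \<le> m + a" "m + a < c" using 2 m_def by auto
      have "ival (rot c m) 0 (m + a) = Wg c (m + a - m) (c - m + 0)" using W_ival[OF m(1) m(3) m(4)] .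
      also have "\<dots> = Wg c a b" using 2 m_def by simp
      finally have "T = ival (rot c m) 0 (m + a)" using 2 by simp
      then have "T \<in> {ival (rot c m) i j | i j. i \<le> j \<and> j < c}"
        by (intro CollectI exI[of _ 0] exI[of _ "m + a"]) (use m in simp)
      then have "subtree_of T (path_g (rot c m) c)" using PR[OF m(2)] by blast
      then have "subtree_of T (cycle_with_path c 0)"
      proof (rule subtree_mono)
        show "fst (path_g (rot c m) c) \<subseteq> fst (cycle_with_path c 0)"
          using rot_img[OF m(2)] C by (simp add: path_g_def)
        show "snd (path_g (rot c m) c) \<subseteq> snd (cycle_with_path c 0)"
          using rot_edges_sub[OF m(1) m(2)] C by simp
      qed
      then show ?thesis by simp
    qed
  qed
qed

lemma card_pairs_le: "2 * card {(i, j). i \<le> j \<and> j < (c::nat)} = c * (c + 1)"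
proof (induction c)
  case 0
  then show ?case by simp
next
  case (Suc c)
  have eq: "{(i, j). i \<le> j \<and> j < Suc c} = {(i, j). i \<le> j \<and> j < c} \<union> (\<lambda>i. (i, c)) ` {..c}"
    by auto
  have f: "finite {(i, j). i \<le> j \<and> j < (c::nat)}"
    by (rule finite_subset[of _ "{..c} \<times> {..c}"]) auto
  have d: "{(i, j). i \<le> j \<and> j < c} \<inter> (\<lambda>i. (i, c)) ` {..c} = {}" by auto
  have "card {(i, j). i \<le> j \<and> j < Suc c} = card {(i, j). i \<le> j \<and> j < c} + card ((\<lambda>i. (i, c)) ` {..c})"
    unfolding eq by (rule card_Un_disjoint[OF f _ d]) simp
  moreover have "card ((\<lambda>i. (i, c)) ` {..c}) = Suc c" by (subst card_image) (auto simp: inj_on_def)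
  ultimately show ?case using Suc.IH by simp
qed

lemma card_pairs_lt: "2 * card {(a, b). a < b \<and> b < (c::nat)} + c = c * c"
proof (induction c)
  case 0
  then show ?case by simp
next
  case (Suc c)
  have eq: "{(a, b). a < b \<and> b < Suc c} = {(a, b). a < b \<and> b < c} \<union> (\<lambda>a. (a, c)) ` {..<c}"
    by auto
  have f: "finite {(a, b). a < b \<and> b < (c::nat)}"
    by (rule finite_subset[of _ "{..c} \<times> {..c}"]) auto
  have d: "{(a, b). a < b \<and> b < c} \<inter> (\<lambda>a. (a, c)) ` {..<c} = {}" by auto
  have "card {(a, b). a < b \<and> b < Suc c} = card {(a, b). a < b \<and> b < c} + card ((\<lambda>a. (a, c)) ` {..<c})"
    unfolding eq by (rule card_Un_disjoint[OF f _ d]) simp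
  moreover have "card ((\<lambda>a. (a, c)) ` {..<c}) = c" by (subst card_image) (auto simp: inj_on_def)
  ultimately show ?case using Suc.IH by simp
qed

lemma ival_id_fst: "fst (ival (\<lambda>t. t) i j) = {i..j}"
  by (simp add: ival_def)

lemma ival_id_edge: "3 \<le> c \<Longrightarrow> j < c \<Longrightarrow> {c - 1, 0} \<notin> snd (ival (\<lambda>t. t) i j)"
  by (auto simp: ival_def doubleton_eq_iff)

lemma Wg_edge: "{c - 1, 0} \<in> snd (Wg c a b)"
  by (simp add: Wg_def)

lemma Wg_fst0: "0 \<in> fst (Wg c a b)"
  by (simp add: Wg_def)

lemma dbl_suc: "({x, Suc x} = {y, Suc y}) = (x = y)"
  by (auto simp: doubleton_eq_iff)

lemma dbl_c: "3 \<le> c \<Longrightarrow> {x, Suc x} \<noteq> {c - 1, 0}"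
  by (auto simp: doubleton_eq_iff)

lemma Wg_key: "3 \<le> c \<Longrightarrow> x < b0 \<Longrightarrow> {x, Suc x} \<notin> snd (Wg c x b0)"
  unfolding Wg_def using dbl_c[of c x] by (auto simp: dbl_suc)

lemma Wg_in1: "x < a0 \<Longrightarrow> {x, Suc x} \<in> snd (Wg c a0 b0)"
  unfolding Wg_def by auto

lemma Wg_inj:
  assumes c: "3 \<le> c" and ab: "a < b" "b < c" and ab': "a' < b'" "b' < c"
    and e: "Wg c a b = Wg c a' b'"
  shows "a = a' \<and> b = b'"
proof -
  have aa: "a = a'"
  proof (rule ccontr)
    assume "a \<noteq> a'"
    then consider "a < a'" | "a' < a" by linarith
    then show False
    proof cases
      case 1
      then have "{a, Suc a} \<in> snd (Wg c a' b')" by (rule Wg_in1)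
      then show False using Wg_key[OF c ab(1)] e by simp
    next
      case 2
      then have "{a', Suc a'} \<in> snd (Wg c a b)" by (rule Wg_in1)
      then show False using Wg_key[OF c ab'(1)] e by simp
    qed
  qed
  have bb: "b = b'"
  proof (rule ccontr)
    assume "b \<noteq> b'"
    then consider "b < b'" | "b' < b" by linarith
    then show False
    proof cases
      case 1
      have "b \<in> fst (Wg c a b)" using ab by (simp add: Wg_def)
      then have "b \<in> fst (Wg c a b')" using e aa by simp
      then show False using 1 ab by (simp add: Wg_def)
    next
      case 2
      have "b' \<in> fst (Wg c a' b')" using ab' by (simp add: Wg_def)
      then have "b' \<in> fst (Wg c a' b)" using e aa by simp
      then show False using 2 ab' by (simp add: Wg_def)
    qed
  qed
  show ?thesis using aa bb by simp
qed

lemma cyc_counts: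
  assumes c: "3 \<le> c"
  shows "card {T. subtree_of T (cycle_with_path c 0)} = c * c"
    and "2 * card {T. subtree_of T (cycle_with_path c 0) \<and> 0 \<in> fst T} = c * (c + 1)"
proof -
  let ?P1 = "{(i, j). i \<le> j \<and> j < c}"
  let ?P2 = "{(a, b). a < b \<and> b < c}"
  let ?I = "{ival (\<lambda>t. t) i j | i j. i \<le> j \<and> j < c}"
  let ?W = "{Wg c a b | a b. a < b \<and> b < c}"
  have I: "?I = (\<lambda>(i, j). ival (\<lambda>t. t) i j) ` ?P1" by auto
  have W: "?W = (\<lambda>(a, b). Wg c a b) ` ?P2" by auto
  have fP1: "finite ?P1" by (rule finite_subset[of _ "{..c} \<times> {..c}"]) auto
  have fP2: "finite ?P2" by (rule finite_subset[of _ "{..c} \<times> {..c}"]) auto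
  have injI: "inj_on (\<lambda>(i, j). ival (\<lambda>t. t) i j) ?P1"
  proof (rule inj_onI, clarsimp)
    fix i j i' j' assume "i \<le> j" "j < c" "i' \<le> j'" "j' < c" "ival (\<lambda>t. t) i j = ival (\<lambda>t. t) i' j'"
    then have "{i..j} = {i'..j'}" "i \<le> j" by (metis ival_id_fst, simp)
    then show "i = i' \<and> j = j'" by (simp add: Icc_eq_Icc)
  qed
  have injW: "inj_on (\<lambda>(a, b). Wg c a b) ?P2"
    by (rule inj_onI, clarsimp) (use Wg_inj[OF c] in blast)
  have cI: "card ?I = card ?P1" unfolding I by (rule card_image[OF injI])
  have cW: "card ?W = card ?P2" unfolding W by (rule card_image[OF injW])
  have fI: "finite ?I" unfolding I using fP1 by simp
  have fW: "finite ?W" unfolding W using fP2 by simp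
  have d: "?I \<inter> ?W = {}"
  proof -
    have "T \<notin> ?W" if "T \<in> ?I" for T
    proof -
      obtain i j where "j < c" "T = ival (\<lambda>t. t) i j" using \<open>T \<in> ?I\<close> by blast
      then have "{c - 1, 0} \<notin> snd T" using ival_id_edge[OF c] by simp
      then show ?thesis using Wg_edge by blast
    qed
    then show ?thesis by blast
  qed
  have ch: "{T. subtree_of T (cycle_with_path c 0)} = ?I \<union> ?W" using cyc_char[OF c] .
  have "card (?I \<union> ?W) = card ?P1 + card ?P2" using card_Un_disjoint[OF fI fW d] cI cW by simp
  then show "card {T. subtree_of T (cycle_with_path c 0)} = c * c"
    using ch card_pairs_le[of c] card_pairs_lt[of c] by simp
  have I0: "{T \<in> ?I. 0 \<in> fst T} = (\<lambda>j. ival (\<lambda>t. t) 0 j) ` {..<c}"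
  proof (intro equalityI subsetI)
    fix T assume "T \<in> {T \<in> ?I. 0 \<in> fst T}"
    then obtain i j where "i \<le> j" "j < c" "T = ival (\<lambda>t. t) i j" "0 \<in> fst T" by blast
    then have "i = 0" "j < c" "T = ival (\<lambda>t. t) 0 j" using ival_id_fst[of i j] by auto
    then show "T \<in> (\<lambda>j. ival (\<lambda>t. t) 0 j) ` {..<c}" by blast
  next
    fix T assume "T \<in> (\<lambda>j. ival (\<lambda>t. t) 0 j) ` {..<c}"
    then obtain j where "j < c" "T = ival (\<lambda>t. t) 0 j" by blast
    then show "T \<in> {T \<in> ?I. 0 \<in> fst T}" using ival_id_fst[of 0 j] by auto
  qed
  have injI0: "inj_on (\<lambda>j. ival (\<lambda>t. t) 0 j) {..<c}"
  proof (rule inj_onI)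
    fix j j' assume "ival (\<lambda>t. t) 0 j = ival (\<lambda>t. t) 0 j'"
    then have "{0..j} = {0..j'}" by (metis ival_id_fst)
    then show "j = j'" by (simp add: Icc_eq_Icc)
  qed
  have W0: "{T \<in> ?W. 0 \<in> fst T} = ?W" using Wg_fst0 by blast
  have eq0: "{T. subtree_of T (cycle_with_path c 0) \<and> 0 \<in> fst T} = {T \<in> ?I. 0 \<in> fst T} \<union> ?W"
    using ch W0 by blast
  have fI0: "finite {T \<in> ?I. 0 \<in> fst T}" using fI by simp
  have d0: "{T \<in> ?I. 0 \<in> fst T} \<inter> ?W = {}" using d by blast
  have u0: "card ({T \<in> ?I. 0 \<in> fst T} \<union> ?W) = card {T \<in> ?I. 0 \<in> fst T} + card ?W"
    by (rule card_Un_disjoint[OF fI0 fW d0])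
  have c0: "card {T \<in> ?I. 0 \<in> fst T} = c" unfolding I0 by (simp add: card_image[OF injI0])
  have "card {T. subtree_of T (cycle_with_path c 0) \<and> 0 \<in> fst T} = c + card ?P2"
    unfolding eq0 using u0 c0 cW by simp
  then show "2 * card {T. subtree_of T (cycle_with_path c 0) \<and> 0 \<in> fst T} = c * (c + 1)"
    using card_pairs_lt[of c] by simp
qed

definition endp :: "nat \<Rightarrow> nat \<Rightarrow> nat" where
  "endp c p = (if p = 0 then 0 else c + p - 1)"

lemma setcompr_lessSuc: "{g i | i. i < Suc p} = insert (g p) {g i | i. i < p}"
  by (auto simp: less_Suc_eq)

lemma cwp_step:
  "cycle_with_path c (Suc p) =
     (insert (c + p) (fst (cycle_with_path c p)), insert {endp c p, c + p} (snd (cycle_with_path c p)))"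
proof -
  have f: "{0..<c + Suc p} = insert (c + p) {0..<c + p}" by auto
  have s: "{{if i = 0 then 0 else c + i - 1, c + i} | i. i < Suc p} =
    insert {endp c p, c + p} {{if i = 0 then 0 else c + i - 1, c + i} | i. i < p}"
    unfolding setcompr_lessSuc endp_def by simp
  show ?thesis unfolding cycle_with_path_def using f s by simp
qed

lemma graph_add:
  assumes "is_graph (V, E)" "u \<in> V" "v \<notin> V"
  shows "is_graph (insert v V, insert {u, v} E)"
  using assms unfolding is_graph_def by (metis fst_conv insertE insertI1 insertI2 snd_conv)

lemma cwp_props:
  assumes c: "3 \<le> c"
  shows "is_graph (cycle_with_path c p) \<and> finite (fst (cycle_with_path c p)) \<and> finite (snd (cycle_with_path c p))"
proof (induction p)
  case 0
  have C: "cycle_with_path c 0 = ({0..<c}, {{i, Suc i} | i. Suc i < c} \<union> {{c - 1, 0}})" using cyc0 c by simp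
  have g: "is_graph (cycle_with_path c 0)"
    unfolding C is_graph_def
  proof (intro ballI)
    fix e assume "e \<in> snd ({0..<c}, {{i, Suc i} | i. Suc i < c} \<union> {{c - 1, 0}})"
    then consider i where "Suc i < c" "e = {i, Suc i}" | "e = {c - 1, 0}" by auto
    then show "\<exists>a b. a \<in> fst ({0..<c}, {{i, Suc i} | i. Suc i < c} \<union> {{c - 1, 0}}) \<and>
       b \<in> fst ({0..<c}, {{i, Suc i} | i. Suc i < c} \<union> {{c - 1, 0}}) \<and> a \<noteq> b \<and> e = {a, b}"
    proof cases
      case (1 i) then show ?thesis by (intro exI[of _ i] exI[of _ "Suc i"]) simp
    next
      case 2 then show ?thesis using c by (intro exI[of _ "c - 1"] exI[of _ 0]) simp
    qed
  qed
  have "finite {i. Suc i < c}" by (rule finite_subset[of _ "{..<c}"]) auto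
  then have "finite {{i, Suc i} | i. Suc i < c}" by (rule finite_image_set)
  then show ?case using g C by simp
next
  case (Suc p)
  have u: "endp c p \<in> fst (cycle_with_path c p)" using c by (simp add: cyc_fst endp_def)
  have v: "c + p \<notin> fst (cycle_with_path c p)" by (simp add: cyc_fst)
  have "is_graph (cycle_with_path c (Suc p))"
    unfolding cwp_step using graph_add[of "fst (cycle_with_path c p)" "snd (cycle_with_path c p)", OF _ u v] Suc.IH
    by simp
  then show ?case using Suc.IH by (simp add: cwp_step)
qed

lemma cwp_rec:
  assumes c: "3 \<le> c"
  shows "card {T. subtree_of T (cycle_with_path c (Suc p)) \<and> Q (fst T)} =
    card {T. subtree_of T (cycle_with_path c p) \<and> Q (fst T)} + (if Q {c + p} then 1 else 0)
    + card {T. subtree_of T (cycle_with_path c p) \<and> endp c p \<in> fst T \<and> Q (insert (c + p) (fst T))}"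
proof -
  obtain V E where VE: "cycle_with_path c p = (V, E)" by (cases "cycle_with_path c p")
  have props: "is_graph (V, E)" "finite V" "finite E" using cwp_props[OF c, of p] VE by auto
  have u: "endp c p \<in> V" using c VE cyc_fst[of c p] by (auto simp: endp_def)
  have v: "c + p \<notin> V" using VE cyc_fst[of c p] by auto
  have st: "cycle_with_path c (Suc p) = (insert (c + p) V, insert {endp c p, c + p} E)"
    using cwp_step[of c p] VE by simp
  show ?thesis unfolding st VE by (rule leaf_card[OF props(1) u v props(2) props(3)])
qed

lemma sub_fst: "subtree_of T (cycle_with_path c p) \<Longrightarrow> fst T \<subseteq> {0..<c + p}"
  by (auto simp: subtree_of_def cyc_fst)

lemma closed_forms:
  assumes c: "3 \<le> c"
  defines "K \<equiv> card {T. subtree_of T (cycle_with_path c 0) \<and> 0 \<in> fst T}"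
  shows "card {T. subtree_of T (cycle_with_path c p) \<and> 0 \<in> fst T \<and> endp c p \<in> fst T} = K
    \<and> card {T. subtree_of T (cycle_with_path c p) \<and> endp c p \<in> fst T} = p + K
    \<and> card {T. subtree_of T (cycle_with_path c p) \<and> 0 \<in> fst T} = (p + 1) * K
    \<and> 2 * card {T. subtree_of T (cycle_with_path c p)} = 2 * c * c + p * (p + 1) + 2 * p * K"
proof (induction p)
  case 0
  have "card {T. subtree_of T (cycle_with_path c 0)} = c * c" using cyc_counts(1)[OF c] .
  then show ?case by (simp add: K_def endp_def)
next
  case (Suc p)
  have ne: "endp c (Suc p) = c + p" by (simp add: endp_def)
  have c0: "c + p \<noteq> 0" using c by simp
  have e1: "{T. subtree_of T (cycle_with_path c p) \<and> c + p \<in> fst T} = {}"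
    using sub_fst by fastforce
  have e2: "{T. subtree_of T (cycle_with_path c p) \<and> 0 \<in> fst T \<and> c + p \<in> fst T} = {}"
    using sub_fst by fastforce
  have rB: "card {T. subtree_of T (cycle_with_path c (Suc p)) \<and> 0 \<in> fst T \<and> c + p \<in> fst T} =
      card {T. subtree_of T (cycle_with_path c p) \<and> 0 \<in> fst T \<and> endp c p \<in> fst T}"
  proof -
    have "card {T. subtree_of T (cycle_with_path c (Suc p)) \<and> (\<lambda>X. 0 \<in> X \<and> c + p \<in> X) (fst T)} =
      card {T. subtree_of T (cycle_with_path c p) \<and> (\<lambda>X. 0 \<in> X \<and> c + p \<in> X) (fst T)}
      + (if (\<lambda>X. 0 \<in> X \<and> c + p \<in> X) {c + p} then 1 else 0)
      + card {T. subtree_of T (cycle_with_path c p) \<and> endp c p \<in> fst T \<and> (\<lambda>X. 0 \<in> X \<and> c + p \<in> X) (insert (c + p) (fst T))}"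
      by (rule cwp_rec[OF c])
    moreover have "{T. subtree_of T (cycle_with_path c p) \<and> endp c p \<in> fst T \<and> (\<lambda>X. 0 \<in> X \<and> c + p \<in> X) (insert (c + p) (fst T))}
      = {T. subtree_of T (cycle_with_path c p) \<and> 0 \<in> fst T \<and> endp c p \<in> fst T}"
      using c0 by auto
    ultimately show ?thesis using e2 c0 by simp
  qed
  have rA: "card {T. subtree_of T (cycle_with_path c (Suc p)) \<and> c + p \<in> fst T} =
      Suc (card {T. subtree_of T (cycle_with_path c p) \<and> endp c p \<in> fst T})"
  proof -
    have "card {T. subtree_of T (cycle_with_path c (Suc p)) \<and> (\<lambda>X. c + p \<in> X) (fst T)} =
      card {T. subtree_of T (cycle_with_path c p) \<and> (\<lambda>X. c + p \<in> X) (fst T)}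
      + (if (\<lambda>X. c + p \<in> X) {c + p} then 1 else 0)
      + card {T. subtree_of T (cycle_with_path c p) \<and> endp c p \<in> fst T \<and> (\<lambda>X. c + p \<in> X) (insert (c + p) (fst T))}"
      by (rule cwp_rec[OF c])
    then show ?thesis using e1 by simp
  qed
  have rZ: "card {T. subtree_of T (cycle_with_path c (Suc p)) \<and> 0 \<in> fst T} =
      card {T. subtree_of T (cycle_with_path c p) \<and> 0 \<in> fst T}
      + card {T. subtree_of T (cycle_with_path c p) \<and> 0 \<in> fst T \<and> endp c p \<in> fst T}"
  proof -
    have "card {T. subtree_of T (cycle_with_path c (Suc p)) \<and> (\<lambda>X. 0 \<in> X) (fst T)} =
      card {T. subtree_of T (cycle_with_path c p) \<and> (\<lambda>X. 0 \<in> X) (fst T)}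
      + (if (\<lambda>X. 0 \<in> X) {c + p} then 1 else 0)
      + card {T. subtree_of T (cycle_with_path c p) \<and> endp c p \<in> fst T \<and> (\<lambda>X. 0 \<in> X) (insert (c + p) (fst T))}"
      by (rule cwp_rec[OF c])
    moreover have "{T. subtree_of T (cycle_with_path c p) \<and> endp c p \<in> fst T \<and> (\<lambda>X. 0 \<in> X) (insert (c + p) (fst T))}
      = {T. subtree_of T (cycle_with_path c p) \<and> 0 \<in> fst T \<and> endp c p \<in> fst T}"
      using c0 by auto
    ultimately show ?thesis using c0 by simp
  qed
  have rS: "card {T. subtree_of T (cycle_with_path c (Suc p))} =
      card {T. subtree_of T (cycle_with_path c p)} + 1
      + card {T. subtree_of T (cycle_with_path c p) \<and> endp c p \<in> fst T}"
  proof -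
    have "card {T. subtree_of T (cycle_with_path c (Suc p)) \<and> (\<lambda>X. True) (fst T)} =
      card {T. subtree_of T (cycle_with_path c p) \<and> (\<lambda>X. True) (fst T)}
      + (if (\<lambda>X. True) {c + p} then 1 else 0)
      + card {T. subtree_of T (cycle_with_path c p) \<and> endp c p \<in> fst T \<and> (\<lambda>X. True) (insert (c + p) (fst T))}"
      by (rule cwp_rec[OF c])
    then show ?thesis by simp
  qed
  show ?case
  proof (intro conjI)
    show "card {T. subtree_of T (cycle_with_path c (Suc p)) \<and> 0 \<in> fst T \<and> endp c (Suc p) \<in> fst T} = K"
      using rB Suc.IH ne by simp
    show "card {T. subtree_of T (cycle_with_path c (Suc p)) \<and> endp c (Suc p) \<in> fst T} = Suc p + K"
      using rA Suc.IH ne by simp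
    show "card {T. subtree_of T (cycle_with_path c (Suc p)) \<and> 0 \<in> fst T} = (Suc p + 1) * K"
      using rZ Suc.IH by simp
    show "2 * card {T. subtree_of T (cycle_with_path c (Suc p))} = 2 * c * c + Suc p * (Suc p + 1) + 2 * Suc p * K"
      using rS Suc.IH by (simp add: algebra_simps)
  qed
qed

lemma final_counts:
  assumes c: "3 \<le> c"
  shows "2 * num_subtrees_at 0 (cycle_with_path c p) = (p + 1) * (c * (c + 1))"
    and "2 * num_subtrees (cycle_with_path c p) = 2 * c * c + p * (p + 1) + p * (c * (c + 1)) + 2"
proof -
  define K where "K = card {T. subtree_of T (cycle_with_path c 0) \<and> 0 \<in> fst T}"
  have K: "2 * K = c * (c + 1)" using cyc_counts(2)[OF c] K_def by simp
  have cf: "card {T. subtree_of T (cycle_with_path c p) \<and> 0 \<in> fst T} = (p + 1) * K"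
    "2 * card {T. subtree_of T (cycle_with_path c p)} = 2 * c * c + p * (p + 1) + 2 * p * K"
    using closed_forms[OF c, of p] K_def by auto
  show "2 * num_subtrees_at 0 (cycle_with_path c p) = (p + 1) * (c * (c + 1))"
    unfolding num_subtrees_at_def cf(1) using K by (metis mult.left_commute)
  have KP: "2 * p * K = p * (c * (c + 1))"
  proof -
    have "2 * p * K = p * (2 * K)" by simp
    also have "\<dots> = p * (c * (c + 1))" using K by simp
    finally show ?thesis .
  qed
  have "2 * num_subtrees (cycle_with_path c p) = 2 * card {T. subtree_of T (cycle_with_path c p)} + 2"
    unfolding num_subtrees_def by simp
  then show "2 * num_subtrees (cycle_with_path c p) = 2 * c * c + p * (p + 1) + p * (c * (c + 1)) + 2"
    using cf(2) KP by linarith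
qed

theorem lemma7:
  fixes l1 l2 :: nat
  assumes "l1 \<ge> l2" and "l2 \<ge> 3"
  shows "num_subtrees (cycle_with_path l1 l2) \<ge> num_subtrees (cycle_with_path l2 l1)
    \<and> num_subtrees_at 0 (cycle_with_path l1 l2) \<ge> num_subtrees_at 0 (cycle_with_path l2 l1)
    \<and> (num_subtrees (cycle_with_path l1 l2) = num_subtrees (cycle_with_path l2 l1) \<longleftrightarrow> l1 = l2)
    \<and> (num_subtrees_at 0 (cycle_with_path l1 l2) = num_subtrees_at 0 (cycle_with_path l2 l1) \<longleftrightarrow> l1 = l2)"
proof (cases "l1 = l2")
  case True
  then show ?thesis by simp
next
  case False
  have c1: "3 \<le> l1" and c2: "3 \<le> l2" using assms by auto
  define Z1 where "Z1 = num_subtrees_at 0 (cycle_with_path l1 l2)"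
  define Z2 where "Z2 = num_subtrees_at 0 (cycle_with_path l2 l1)"
  define S1 where "S1 = num_subtrees (cycle_with_path l1 l2)"
  define S2 where "S2 = num_subtrees (cycle_with_path l2 l1)"
  have z1: "2 * Z1 = (l2 + 1) * (l1 * (l1 + 1))" using final_counts(1)[OF c1, of l2] Z1_def by simp
  have z2: "2 * Z2 = (l1 + 1) * (l2 * (l2 + 1))" using final_counts(1)[OF c2, of l1] Z2_def by simp
  have s1: "2 * S1 = 2 * l1 * l1 + l2 * (l2 + 1) + l2 * (l1 * (l1 + 1)) + 2"
    using final_counts(2)[OF c1, of l2] S1_def by simp
  have s2: "2 * S2 = 2 * l2 * l2 + l1 * (l1 + 1) + l1 * (l2 * (l2 + 1)) + 2"
    using final_counts(2)[OF c2, of l1] S2_def by simp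
  define d where "d = l1 - l2"
  have d: "0 < d" using False assms d_def by simp
  have big: "16 \<le> (l1 + 1) * (l2 + 1)"
  proof -
    have "4 * 4 \<le> (l1 + 1) * (l2 + 1)" using c1 c2 by (intro mult_le_mono) auto
    then show ?thesis by simp
  qed
  have pos: "0 < (l2 + 1) * (l1 + 1) * d" using d by simp
  have zz: "2 * Z1 = 2 * Z2 + (l2 + 1) * (l1 + 1) * d"
    using arithZ[OF assms(1)] z1 z2 d_def by simp
  have "d * 16 \<le> d * ((l1 + 1) * (l2 + 1))" using big by (rule mult_le_mono2)
  moreover have "2 * d < d * 16" using d by simp
  ultimately have "2 * d < d * ((l1 + 1) * (l2 + 1))" by linarith
  then have gt: "2 * d < d * (l1 + 1) * (l2 + 1)" by (simp only: mult.assoc)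
  have ss: "2 * S1 + 2 * d = 2 * S2 + d * (l1 + 1) * (l2 + 1)"
    using arithS[OF assms(1)] s1 s2 d_def by simp
  have "Z2 < Z1" using zz pos by linarith
  moreover have "S2 < S1" using ss gt by linarith
  ultimately show ?thesis using False unfolding Z1_def Z2_def S1_def S2_def by simp
qed

end
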